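(* For every $d\ge1$ and every unlabeled pool $S_u\subseteq\mathbb{R}_+^d$ of size $m$, the auditing complexity of $S_u$ with respect to $\mathcal{H}_\Box$ is at most $d$.
   Context: For $\mathbf a\in\mathbb{R}_+^d$, $h_{\mathbf a}(x)=2\mathbb{I}[\exists i\in[d],\ x[i]\ge a[i]]-1$, and $\mathcal{H}_\Box=\{h_{\mathbf a}:\mathbf a\in\mathbb{R}_+^d\}$ (points outside the "rectangle" are positive). The auditing complexity of a finite unlabeled pool $S_u$ with respect to a class $\mathcal{H}$ is the minimum, over algorithms that sequentially query labels of points of $S_u$ and that for every labeling of $S_u$ consistent with some $h\in\mathcal{H}$ output (with probability 1) a hypothesis with zero error on the labeled pool, of the worst case (over such labelings) number of queried points whose label is $-1$. *)

theory Defs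
  imports "HOL-Analysis.Analysis" "HOL-Library.Extended_Nat"
begin

definition h_box :: "real ^ 'd \<Rightarrow> real ^ 'd \<Rightarrow> int" where
  "h_box a x = (if \<exists>i. x $ i \<ge> a $ i then 1 else -1)"

definition H_box :: "(real ^ 'd \<Rightarrow> int) set" where
  "H_box = {h_box a | a. \<forall>i. a $ i \<ge> 0}"

text \<open>A deterministic adaptive auditing algorithm: given the history of queried
points and their labels, it either queries a point or stops and outputs a hypothesis.\<close>

datatype ('x, 'h) action = Query 'x | Output 'h

type_synonym ('x, 'h) algorithm = "('x \<times> int) list \<Rightarrow> ('x, 'h) action"

fun run :: "('x, 'h) algorithm \<Rightarrow> ('x \<Rightarrow> int) \<Rightarrow> nat \<Rightarrow> ('x \<times> int) list
            \<Rightarrow> ('h \<times> ('x \<times> int) list) option" where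
  "run A L 0 hist = None"
| "run A L (Suc n) hist =
     (case A hist of
        Output h \<Rightarrow> Some (h, hist)
      | Query x \<Rightarrow> run A L n (hist @ [(x, L x)]))"

definition consistent_labelings :: "('x \<Rightarrow> int) set \<Rightarrow> 'x set \<Rightarrow> ('x \<Rightarrow> int) set" where
  "consistent_labelings H S = {L. \<exists>h\<in>H. \<forall>x\<in>S. L x = h x}"

definition valid_auditor :: "('x \<Rightarrow> int) set \<Rightarrow> 'x set \<Rightarrow> ('x, 'x \<Rightarrow> int) algorithm \<Rightarrow> bool" where
  "valid_auditor H S A \<longleftrightarrow>
     (\<forall>L\<in>consistent_labelings H S. \<exists>n h hist.
        run A L n [] = Some (h, hist) \<and> set (map fst hist) \<subseteq> S \<and>
        h \<in> H \<and> (\<forall>x\<in>S. h x = L x))"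

definition audit_cost :: "('x, 'h) algorithm \<Rightarrow> ('x \<Rightarrow> int) \<Rightarrow> nat" where
  "audit_cost A L = card {x. \<exists>n h hist. run A L n [] = Some (h, hist) \<and> (x, -1) \<in> set hist}"

definition auditing_complexity :: "('x \<Rightarrow> int) set \<Rightarrow> 'x set \<Rightarrow> enat" where
  "auditing_complexity H S =
     (INF A \<in> {A. valid_auditor H S A}. SUP L \<in> consistent_labelings H S. enat (audit_cost A L))"

end

theory Submission
  imports Defs
begin

definition negs :: "((real ^ 'd) \<times> int) list \<Rightarrow> (real ^ 'd) set" where
  "negs hist = {x. (x, -1) \<in> set hist}"

definition notdone :: "(real ^ 'd) set \<Rightarrow> ((real ^ 'd) \<times> int) list \<Rightarrow> 'd \<Rightarrow> real ^ 'd \<Rightarrow> bool" where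
  "notdone S hist j x \<longleftrightarrow> x \<in> S \<and> x \<notin> fst ` set hist \<and> (\<forall>k\<in>negs hist. k $ j < x $ j)"

definition Done :: "(real ^ 'd) set \<Rightarrow> ((real ^ 'd) \<times> int) list \<Rightarrow> 'd set" where
  "Done S hist = {j. \<not> (\<exists>x. notdone S hist j x)}"

definition outspec :: "(real ^ 'd) set \<Rightarrow> ((real ^ 'd) \<times> int) list \<Rightarrow> (real ^ 'd \<Rightarrow> int) \<Rightarrow> bool" where
  "outspec S hist h \<longleftrightarrow> h \<in> H_box \<and> (\<forall>x\<in>S. (\<forall>l. (x, l) \<in> set hist \<longrightarrow> h x = l) \<and>
      (x \<notin> fst ` set hist \<longrightarrow> h x = -1))"

definition goodp :: "(real ^ 'd) set \<Rightarrow> ((real ^ 'd) \<times> int) list \<Rightarrow> 'd \<times> (real ^ 'd) \<Rightarrow> bool" where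
  "goodp S hist p \<longleftrightarrow> notdone S hist (fst p) (snd p) \<and>
     (\<forall>y. notdone S hist (fst p) y \<longrightarrow> y $ (fst p) \<le> (snd p) $ (fst p))"

definition alg :: "(real ^ 'd) set \<Rightarrow> (real ^ 'd, real ^ 'd \<Rightarrow> int) algorithm" where
  "alg S hist = (if \<exists>j x. notdone S hist j x then Query (snd (SOME p. goodp S hist p))
                 else Output (SOME h. outspec S hist h))"

lemma goodp_ex:
  assumes "finite S" "notdone S hist j x0"
  shows "\<exists>p. goodp S hist p"
proof -
  let ?W = "{y. notdone S hist j y}"
  have fin: "finite ?W" using assms(1) by (rule finite_subset[rotated]) (auto simp: notdone_def)
  have ne: "(\<lambda>y. y $ j) ` ?W \<noteq> {}" using assms(2) by auto
  have "Max ((\<lambda>y. y $ j) ` ?W) \<in> (\<lambda>y. y $ j) ` ?W" using fin ne by (intro Max_in) auto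
  then obtain x where x: "notdone S hist j x" "x $ j = Max ((\<lambda>y. y $ j) ` ?W)" by auto
  have "\<forall>y. notdone S hist j y \<longrightarrow> y $ j \<le> x $ j"
    using fin x(2) by (auto intro: Max_ge)
  then have "goodp S hist (j, x)" using x(1) by (simp add: goodp_def)
  then show ?thesis by blast
qed

lemma run_det:
  "run A L n h0 = Some r \<Longrightarrow> run A L n' h0 = Some r' \<Longrightarrow> r = r'"
proof (induction n arbitrary: n' h0)
  case 0 then show ?case by simp
next
  case (Suc n)
  then obtain n'' where n': "n' = Suc n''" by (cases n') auto
  show ?case
  proof (cases "A h0")
    case (Query x)
    then show ?thesis using Suc by (auto simp: n')
  next
    case (Output h)
    then show ?thesis using Suc by (auto simp: n')
  qed
qed

lemma Done_mono:
  "Done S hist \<subseteq> Done S (hist @ [(x, l)])"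
  unfolding Done_def notdone_def negs_def by auto

lemma main:
  fixes S :: "(real ^ 'd) set"
  assumes fin: "finite S" and cons: "\<forall>x\<in>S. L x = h_box a x"
  shows "fst ` set hist \<subseteq> S \<Longrightarrow> (\<forall>(x,l)\<in>set hist. l = L x) \<Longrightarrow>
    card (negs hist) \<le> card (Done S hist) \<Longrightarrow> card (S - fst ` set hist) = n \<Longrightarrow>
    \<exists>h hist'. run (alg S) L (Suc n) hist = Some (h, hist') \<and> fst ` set hist' \<subseteq> S \<and>
      (\<forall>(x,l)\<in>set hist'. l = L x) \<and> card (negs hist') \<le> card (Done S hist') \<and>
      \<not> (\<exists>j x. notdone S hist' j x) \<and> h = (SOME h. outspec S hist' h)"
proof (induction n arbitrary: hist)
  case 0
  have "\<not> (\<exists>j x. notdone S hist j x)"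
  proof
    assume "\<exists>j x. notdone S hist j x"
    then obtain j x where "notdone S hist j x" by blast
    then have "x \<in> S - fst ` set hist" by (auto simp: notdone_def)
    moreover have "finite (S - fst ` set hist)" using fin by auto
    ultimately show False using 0 by auto
  qed
  then show ?case using 0 by (auto simp: alg_def)
next
  case (Suc n)
  show ?case
  proof (cases "\<exists>j x. notdone S hist j x")
    case False
    then show ?thesis using Suc.prems by (auto simp: alg_def)
  next
    case True
    then obtain j0 x0 where "notdone S hist j0 x0" by blast
    then obtain p0 where "goodp S hist p0" using goodp_ex fin by blast
    define p where "p = (SOME p. goodp S hist p)"
    have gp: "goodp S hist p" unfolding p_def by (rule someI, fact)
    obtain j x where pjx: "p = (j, x)" by (cases p)
    have nd: "notdone S hist j x" and mx: "\<forall>y. notdone S hist j y \<longrightarrow> y $ j \<le> x $ j"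
      using gp pjx by (auto simp: goodp_def)
    have A: "alg S hist = Query x" using True pjx by (simp add: alg_def p_def[symmetric])
    define hist' where "hist' = hist @ [(x, L x)]"
    have xS: "x \<in> S" and xq: "x \<notin> fst ` set hist" using nd by (auto simp: notdone_def)
    have fs: "fst ` set hist' = insert x (fst ` set hist)" by (auto simp: hist'_def)
    have c1: "fst ` set hist' \<subseteq> S" using fs xS Suc.prems(1) by auto
    have c2: "\<forall>(y,l)\<in>set hist'. l = L y" using Suc.prems(2) by (auto simp: hist'_def)
    have c4: "card (S - fst ` set hist') = n"
    proof -
      have "S - fst ` set hist' = (S - fst ` set hist) - {x}" using fs by auto
      moreover have "x \<in> S - fst ` set hist" using xS xq by auto
      ultimately show ?thesis using Suc.prems(4) fin by (simp add: card_Diff_singleton)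
    qed
    have negsub: "negs hist \<subseteq> fst ` set hist" by (force simp: negs_def)
    have finneg: "finite (negs hist)" using negsub finite_subset by blast
    have c3: "card (negs hist') \<le> card (Done S hist')"
    proof (cases "L x = -1")
      case False
      then have "negs hist' = negs hist" by (auto simp: negs_def hist'_def)
      moreover have "card (Done S hist) \<le> card (Done S hist')"
        unfolding hist'_def by (rule card_mono[OF finite Done_mono])
      ultimately show ?thesis using Suc.prems(3) by simp
    next
      case True
      have xn: "x \<notin> negs hist" using xq negsub by auto
      have "negs hist' = insert x (negs hist)" using True by (auto simp: negs_def hist'_def)
      then have e1: "card (negs hist') = Suc (card (negs hist))" using xn finneg by simp
      have jn: "j \<notin> Done S hist" using nd by (auto simp: Done_def)
      have jd: "j \<in> Done S hist'"
      proof -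
        { fix y assume y: "notdone S hist' j y"
          have "x \<in> negs hist'" using True by (auto simp: negs_def hist'_def)
          then have "x $ j < y $ j" using y by (auto simp: notdone_def)
          moreover have "notdone S hist j y" using y by (auto simp: notdone_def negs_def hist'_def)
          then have "y $ j \<le> x $ j" using mx by blast
          ultimately have False by simp }
        then show ?thesis by (auto simp: Done_def)
      qed
      have "insert j (Done S hist) \<subseteq> Done S hist'" using jd Done_mono unfolding hist'_def by blast
      then have "card (insert j (Done S hist)) \<le> card (Done S hist')" by (rule card_mono[OF finite])
      then have "Suc (card (Done S hist)) \<le> card (Done S hist')" using jn by simp
      then show ?thesis using e1 Suc.prems(3) by simp
    qed
    from Suc.IH[OF c1 c2 c3 c4] obtain h hist'' where
      r: "run (alg S) L (Suc n) hist' = Some (h, hist'')" and rest: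
      "fst ` set hist'' \<subseteq> S" "(\<forall>(x,l)\<in>set hist''. l = L x)" "card (negs hist'') \<le> card (Done S hist'')"
      "\<not> (\<exists>j x. notdone S hist'' j x)" "h = (SOME h. outspec S hist'' h)" by blast
    have "run (alg S) L (Suc (Suc n)) hist = Some (h, hist'')" using A r by (simp add: hist'_def)
    then show ?thesis using rest by blast
  qed
qed

lemma final_ok:
  fixes S :: "(real ^ 'd) set"
  assumes cons: "\<forall>x\<in>S. L x = h_box a x" and a0: "\<forall>i. a $ i \<ge> 0"
    and sub: "fst ` set hist \<subseteq> S"
    and lab: "\<forall>(x,l)\<in>set hist. l = L x" and nd: "\<not> (\<exists>j x. notdone S hist j x)"
  shows "outspec S hist (h_box a)"
proof -
  have hb: "h_box a \<in> H_box" using a0 by (auto simp: H_box_def)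
  have unq: "h_box a x = -1" if xs: "x \<in> S" "x \<notin> fst ` set hist" for x
  proof (rule ccontr)
    assume "h_box a x \<noteq> -1"
    then obtain i where xi: "x $ i \<ge> a $ i" by (auto simp: h_box_def split: if_splits)
    have "\<not> notdone S hist i x" using nd by blast
    then obtain k where k: "k \<in> negs hist" "k $ i \<ge> x $ i" using xs by (auto simp: notdone_def not_less)
    have kin: "(k, -1) \<in> set hist" using k(1) by (auto simp: negs_def)
    then have "L k = -1" using lab by auto
    moreover have "k \<in> S" using kin sub by force
    moreover have "h_box a k = 1" using k(2) xi unfolding h_box_def by (metis order_trans)
    ultimately show False using cons by auto
  qed
  have "\<forall>x\<in>S. (\<forall>l. (x, l) \<in> set hist \<longrightarrow> h_box a x = l)"
  proof (intro ballI allI impI)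
    fix x l assume "x \<in> S" "(x, l) \<in> set hist"
    then show "h_box a x = l" using lab cons by auto
  qed
  then show ?thesis using hb unq by (auto simp: outspec_def)
qed

theorem theorem3:
  fixes S_u :: "(real ^ 'd) set" and m :: nat
  assumes "finite S_u" and "card S_u = m"
    and "\<forall>x\<in>S_u. \<forall>i. x $ i \<ge> 0"
  shows "auditing_complexity H_box S_u \<le> enat CARD('d)"
proof -
  let ?A = "alg S_u"
  have key: "\<exists>n h hist. run ?A L n [] = Some (h, hist) \<and> set (map fst hist) \<subseteq> S_u \<and>
        h \<in> H_box \<and> (\<forall>x\<in>S_u. h x = L x) \<and> card (negs hist) \<le> CARD('d)"
    if L: "L \<in> consistent_labelings H_box S_u" for L
  proof -
    obtain a where a0: "\<forall>i. a $ i \<ge> 0" and cons: "\<forall>x\<in>S_u. L x = h_box a x"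
      using L by (auto simp: consistent_labelings_def H_box_def)
    have n0: "card (negs ([] :: ((real ^ 'd) \<times> int) list)) \<le> card (Done S_u [])"
      by (simp add: negs_def)
    obtain h hist where r: "run ?A L (Suc (card (S_u - fst ` set []))) [] = Some (h, hist)"
      and sub: "fst ` set hist \<subseteq> S_u" and lab: "\<forall>(x,l)\<in>set hist. l = L x"
      and cn: "card (negs hist) \<le> card (Done S_u hist)"
      and nd: "\<not> (\<exists>j x. notdone S_u hist j x)" and hh: "h = (SOME h. outspec S_u hist h)"
      using main[OF assms(1) cons, of "[]", OF _ _ n0 refl] by auto
    have "outspec S_u hist (h_box a)" using final_ok[OF cons a0 sub lab nd] .
    then have os: "outspec S_u hist h" unfolding hh by (rule someI[where x="h_box a"])
    have agree: "\<forall>x\<in>S_u. h x = L x"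
    proof
      fix x assume x: "x \<in> S_u"
      show "h x = L x"
      proof (cases "x \<in> fst ` set hist")
        case True
        then obtain l where "(x, l) \<in> set hist" by force
        then show ?thesis using os x lab by (auto simp: outspec_def)
      next
        case False
        then have "h x = -1" using os x by (auto simp: outspec_def)
        moreover have "h_box a x = -1" using final_ok[OF cons a0 sub lab nd] x False
          by (auto simp: outspec_def)
        ultimately show ?thesis using cons x by simp
      qed
    qed
    have "card (Done S_u hist) \<le> CARD('d)" by (rule card_mono) auto
    moreover have "h \<in> H_box" using os by (simp add: outspec_def)
    ultimately show ?thesis using r sub agree cn
      by (intro exI[of _ "Suc (card (S_u - fst ` set []))"] exI[of _ h] exI[of _ hist]) simp
  qed
  have valid: "valid_auditor H_box S_u ?A"
    unfolding valid_auditor_def using key by blast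
  have cost: "enat (audit_cost ?A L) \<le> enat CARD('d)"
    if L: "L \<in> consistent_labelings H_box S_u" for L
  proof -
    obtain n h hist where r: "run ?A L n [] = Some (h, hist)" and c: "card (negs hist) \<le> CARD('d)"
      using key[OF L] by blast
    have "{x. \<exists>n h hist. run ?A L n [] = Some (h, hist) \<and> (x, -1) \<in> set hist} = negs hist"
      using run_det[OF r] r unfolding negs_def by (auto; metis prod.inject)
    then show ?thesis using c by (simp add: audit_cost_def)
  qed
  have "auditing_complexity H_box S_u \<le> (SUP L \<in> consistent_labelings H_box S_u. enat (audit_cost ?A L))"
    unfolding auditing_complexity_def using valid by (intro INF_lower) simp
  also have "\<dots> \<le> enat CARD('d)" using cost by (intro SUP_least) simp
  finally show ?thesis .
qed

end
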